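(* Fix $k\in\mathbb{N}$ and let $Q$ be a class of graphs (closed under isomorphism) each of treewidth at most $k$. Then $P_Q$ is weakly distinguishing.
   Context: All graphs are finite and simple. For a class $Q$, $P_Q(G;X)=\sum_{A\subseteq V(G):\, G[A]\in Q}X^{|A|}$, where $G[A]$ is the induced subgraph on $A$. A graph $G$ is $P$-unique if every graph $H$ with $P(G)=P(H)$ is isomorphic to $G$. With $\mathcal{G}(n)$ the set of isomorphism classes of graphs on $n$ vertices and $U_P(n)$ the $P$-unique graphs in $\mathcal{G}(n)$, $P$ is weakly distinguishing if $\lim_{n\to\infty}|U_P(n)|/|\mathcal{G}(n)|=0$. *)

theory Defs
  imports "HOL-Computational_Algebra.Polynomial"
begin

text \<open>Finite simple graphs with vertices drawn from nat: a pair (V, E) where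
  V is a finite vertex set and E a set of 2-element subsets of V.
  Every finite simple graph is isomorphic to one of this form.\<close>

type_synonym graph = "nat set \<times> nat set set"

definition verts :: "graph \<Rightarrow> nat set" where "verts G = fst G"
definition edges :: "graph \<Rightarrow> nat set set" where "edges G = snd G"

definition is_graph :: "graph \<Rightarrow> bool" where
  "is_graph G \<longleftrightarrow> finite (verts G) \<and>
     (\<forall>e\<in>edges G. e \<subseteq> verts G \<and> card e = 2)"

definition induced :: "graph \<Rightarrow> nat set \<Rightarrow> graph" where
  "induced G A = (A, {e \<in> edges G. e \<subseteq> A})"

definition graph_iso :: "graph \<Rightarrow> graph \<Rightarrow> bool" where
  "graph_iso G H \<longleftrightarrow> (\<exists>f. bij_betw f (verts G) (verts H) \<and>
     (\<forall>u\<in>verts G. \<forall>v\<in>verts G. {u, v} \<in> edges G \<longleftrightarrow> {f u, f v} \<in> edges H))"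

definition connected_graph :: "graph \<Rightarrow> bool" where
  "connected_graph G \<longleftrightarrow>
     (\<forall>u\<in>verts G. \<forall>v\<in>verts G. (u, v) \<in> {(x, y). {x, y} \<in> edges G}\<^sup>*)"

definition is_tree :: "graph \<Rightarrow> bool" where
  "is_tree T \<longleftrightarrow> is_graph T \<and> verts T \<noteq> {} \<and> connected_graph T \<and>
     card (edges T) + 1 = card (verts T)"

definition tree_decomp_width :: "graph \<Rightarrow> graph \<Rightarrow> (nat \<Rightarrow> nat set) \<Rightarrow> nat \<Rightarrow> bool" where
  "tree_decomp_width G T B k \<longleftrightarrow> is_tree T \<and>
     (\<forall>t\<in>verts T. B t \<subseteq> verts G \<and> card (B t) \<le> k + 1) \<and>
     (\<Union>t\<in>verts T. B t) = verts G \<and>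
     (\<forall>e\<in>edges G. \<exists>t\<in>verts T. e \<subseteq> B t) \<and>
     (\<forall>v\<in>verts G. connected_graph (induced T {t \<in> verts T. v \<in> B t}))"

definition treewidth_le :: "graph \<Rightarrow> nat \<Rightarrow> bool" where
  "treewidth_le G k \<longleftrightarrow> (\<exists>T B. tree_decomp_width G T B k)"

definition iso_closed :: "graph set \<Rightarrow> bool" where
  "iso_closed Q \<longleftrightarrow> (\<forall>G H. G \<in> Q \<longrightarrow> is_graph H \<longrightarrow> graph_iso G H \<longrightarrow> H \<in> Q)"

definition P_class :: "graph set \<Rightarrow> graph \<Rightarrow> nat poly" where
  "P_class Q G = (\<Sum>A\<in>{A. A \<subseteq> verts G \<and> induced G A \<in> Q}. monom 1 (card A))"

definition P_unique :: "(graph \<Rightarrow> 'b) \<Rightarrow> graph \<Rightarrow> bool" where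
  "P_unique P G \<longleftrightarrow> (\<forall>H. is_graph H \<longrightarrow> P H = P G \<longrightarrow> graph_iso G H)"

definition graphs_on :: "nat \<Rightarrow> graph set" where
  "graphs_on n = {G. is_graph G \<and> verts G = {0..<n}}"

definition iso_rel :: "nat \<Rightarrow> (graph \<times> graph) set" where
  "iso_rel n = {(G, H). G \<in> graphs_on n \<and> H \<in> graphs_on n \<and> graph_iso G H}"

definition iso_classes :: "nat \<Rightarrow> graph set set" where
  "iso_classes n = graphs_on n // iso_rel n"

definition unique_classes :: "(graph \<Rightarrow> 'b) \<Rightarrow> nat \<Rightarrow> graph set set" where
  "unique_classes P n = {C \<in> iso_classes n. \<forall>G\<in>C. P_unique P G}"

definition weakly_distinguishing :: "(graph \<Rightarrow> 'b) \<Rightarrow> bool" where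
  "weakly_distinguishing P \<longleftrightarrow>
     (\<lambda>n. real (card (unique_classes P n)) / real (card (iso_classes n))) \<longlonglongrightarrow> 0"

end

theory Submission
  imports Defs "HOL-Combinatorics.Permutations" "HOL-Library.FuncSet" "HOL-Real_Asymp.Real_Asymp"
begin


definition rel :: "nat set set \<Rightarrow> nat set \<Rightarrow> (nat \<times> nat) set" where
  "rel E S = {(x,y). {x,y} \<in> E \<and> x \<in> S \<and> y \<in> S}"

lemma verts_induced[simp]: "verts (induced G A) = A"
  by (simp add: induced_def verts_def)

lemma edges_induced[simp]: "edges (induced G A) = {e \<in> edges G. e \<subseteq> A}"
  by (simp add: induced_def edges_def)

lemma conn_induced:
  "connected_graph (induced T S) \<longleftrightarrow> (\<forall>u\<in>S. \<forall>v\<in>S. (u,v) \<in> (rel (edges T) S)\<^sup>*)"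
proof -
  have "{(x, y). {x, y} \<in> edges (induced T S)} = rel (edges T) S"
    by (auto simp: rel_def)
  then show ?thesis by (simp add: connected_graph_def)
qed

lemma conn_self:
  assumes "is_graph T"
  shows "connected_graph T \<longleftrightarrow> connected_graph (induced T (verts T))"
proof -
  have "{(x, y). {x, y} \<in> edges T} = {(x, y). {x, y} \<in> edges (induced T (verts T))}"
    using assms by (auto simp: is_graph_def)
  then show ?thesis by (simp add: connected_graph_def)
qed

lemma induced_induced:
  "B \<subseteq> A \<Longrightarrow> induced (induced G A) B = induced G B"
  by (auto simp: induced_def edges_def)

lemma is_graph_induced:
  "is_graph G \<Longrightarrow> A \<subseteq> verts G \<Longrightarrow> is_graph (induced G A)"
  by (auto simp: is_graph_def intro: finite_subset)

lemma first_step: "(u,v) \<in> R\<^sup>* \<Longrightarrow> u \<noteq> v \<Longrightarrow> \<exists>y. (u,y) \<in> R"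
  by (induct rule: converse_rtrancl_induct) auto

lemma leaf_conn:
  assumes conn: "\<forall>u\<in>S. \<forall>v\<in>S. (u,v) \<in> (rel E S)\<^sup>*"
    and leaf: "\<forall>y. {l,y} \<in> E \<longrightarrow> y = p"
  shows "\<forall>u\<in>S-{l}. \<forall>v\<in>S-{l}. (u,v) \<in> (rel E (S-{l}))\<^sup>*"
proof (intro ballI)
  fix u v assume u: "u \<in> S-{l}" and v: "v \<in> S-{l}"
  have "(u,v) \<in> (rel E S)\<^sup>*" using conn u v by auto
  have key: "(x \<noteq> l \<longrightarrow> (u,x) \<in> (rel E (S-{l}))\<^sup>*) \<and> (x = l \<longrightarrow> (u,p) \<in> (rel E (S-{l}))\<^sup>*)"
    if "(u,x) \<in> (rel E S)\<^sup>*" for x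
    using that
  proof (induct rule: rtrancl_induct)
    case base
    then show ?case using u by auto
  next
    case (step y z)
    have yz: "{y,z} \<in> E" "y \<in> S" "z \<in> S" using step(2) by (auto simp: rel_def)
    show ?case
    proof (cases "y = l")
      case True
      then show ?thesis
      proof (cases "z = l")
        case False
        have "z = p" using leaf yz True by auto
        then show ?thesis using step(3) True False by auto
      qed (use step(3) True in auto)
    next
      case False
      then show ?thesis
      proof (cases "z = l")
        case True
        have "{l,y} \<in> E" using yz True by (simp add: insert_commute)
        then have "y = p" using leaf by auto
        then show ?thesis using step(3) False True by auto
      next
        case False2: False
        have "(y,z) \<in> rel E (S-{l})" using yz False False2 by (auto simp: rel_def)
        then show ?thesis using step(3) False False2
          by (meson rtrancl.rtrancl_into_rtrancl)
      qed
    qed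
  qed
  show "(u,v) \<in> (rel E (S-{l}))\<^sup>*" using key[OF \<open>(u,v) \<in> (rel E S)\<^sup>*\<close>] v by auto
qed

lemma edge_card2: "is_graph G \<Longrightarrow> e \<in> edges G \<Longrightarrow> card e = 2"
  by (auto simp: is_graph_def)

lemma edge_sub: "is_graph G \<Longrightarrow> e \<in> edges G \<Longrightarrow> e \<subseteq> verts G"
  by (auto simp: is_graph_def)

lemma finite_edges: "is_graph G \<Longrightarrow> finite (edges G)"
proof -
  assume g: "is_graph G"
  have "edges G \<subseteq> Pow (verts G)" using g by (auto simp: is_graph_def)
  moreover have "finite (verts G)" using g by (simp add: is_graph_def)
  ultimately show ?thesis by (meson finite_Pow_iff finite_subset)
qed

lemma handshake:
  assumes g: "is_graph T"
  shows "(\<Sum>v\<in>verts T. card {e\<in>edges T. v \<in> e}) = 2 * card (edges T)"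
proof -
  have fV: "finite (verts T)" using g by (simp add: is_graph_def)
  have fE: "finite (edges T)" using finite_edges[OF g] .
  have "(\<Sum>v\<in>verts T. card {e\<in>edges T. v \<in> e}) = (\<Sum>v\<in>verts T. \<Sum>e\<in>edges T. if v \<in> e then 1 else 0)"
    using fE by (simp add: sum.If_cases Int_def)
  also have "\<dots> = (\<Sum>e\<in>edges T. \<Sum>v\<in>verts T. if v \<in> e then 1 else 0)"
    by (rule sum.swap)
  also have "\<dots> = (\<Sum>e\<in>edges T. 2)"
  proof (rule sum.cong)
    fix e assume e: "e \<in> edges T"
    have "(\<Sum>v\<in>verts T. if v \<in> e then 1 else 0) = card (verts T \<inter> e)"
      using fV by (simp add: sum.If_cases)
    also have "verts T \<inter> e = e" using edge_sub[OF g e] by auto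
    finally show "(\<Sum>v\<in>verts T. if v \<in> e then 1 else (0::nat)) = 2" using edge_card2[OF g e] by simp
  qed simp
  finally show ?thesis by simp
qed

lemma leaf_exists:
  assumes t: "is_tree T" and c: "card (verts T) \<ge> 2"
  shows "\<exists>l\<in>verts T. \<exists>p. p \<noteq> l \<and> {l,p} \<in> edges T \<and> (\<forall>y. {l,y} \<in> edges T \<longrightarrow> y = p)"
proof -
  have g: "is_graph T" using t by (simp add: is_tree_def)
  have fV: "finite (verts T)" using g by (simp add: is_graph_def)
  have fE: "finite (edges T)" using finite_edges[OF g] .
  have ce: "card (edges T) + 1 = card (verts T)" using t by (simp add: is_tree_def)
  have "\<exists>v\<in>verts T. card {e\<in>edges T. v \<in> e} \<le> 1"
  proof (rule ccontr)
    assume "\<not> ?thesis"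
    then have "\<forall>v\<in>verts T. 2 \<le> card {e\<in>edges T. v \<in> e}" by auto
    then have "(\<Sum>v\<in>verts T. 2) \<le> (\<Sum>v\<in>verts T. card {e\<in>edges T. v \<in> e})"
      by (intro sum_mono) auto
    then have "2 * card (verts T) \<le> 2 * card (edges T)" using handshake[OF g] by simp
    then show False using ce by simp
  qed
  then obtain v where v: "v \<in> verts T" and dv: "card {e\<in>edges T. v \<in> e} \<le> 1" by auto
  obtain w where w: "w \<in> verts T" "w \<noteq> v"
  proof -
    have "card (verts T - {v}) \<ge> 1" using c v fV by simp
    then have "verts T - {v} \<noteq> {}" by (metis card.empty not_one_le_zero)
    then show ?thesis using that by auto
  qed
  have "connected_graph T" using t by (simp add: is_tree_def)
  then have "(v,w) \<in> {(x, y). {x, y} \<in> edges T}\<^sup>*" using v w by (simp add: connected_graph_def)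
  from first_step[OF this w(2)[symmetric]] obtain y where "(v,y) \<in> {(x, y). {x, y} \<in> edges T}" by blast
  then have y: "{v,y} \<in> edges T" by simp
  have yv: "y \<noteq> v" using edge_card2[OF g y] by auto
  have "{e\<in>edges T. v \<in> e} = {{v,y}}"
  proof -
    have "{v,y} \<in> {e\<in>edges T. v \<in> e}" using y by auto
    moreover have "finite {e\<in>edges T. v \<in> e}" using fE by simp
    moreover have "card {e\<in>edges T. v \<in> e} \<noteq> 0" using calculation by auto
    ultimately have "card {e\<in>edges T. v \<in> e} = 1" using dv by linarith
    then obtain e0 where "{e\<in>edges T. v \<in> e} = {e0}" by (meson card_1_singletonE)
    then show ?thesis using \<open>{v,y} \<in> {e\<in>edges T. v \<in> e}\<close> by auto
  qed
  have uniq: "\<forall>z. {v,z} \<in> edges T \<longrightarrow> z = y"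
  proof (intro allI impI)
    fix z assume z: "{v,z} \<in> edges T"
    then have "{v,z} \<in> {e\<in>edges T. v \<in> e}" by simp
    then have "{v,z} = {v,y}" using \<open>{e\<in>edges T. v \<in> e} = {{v,y}}\<close> by simp
    moreover have "z \<noteq> v" using edge_card2[OF g z] by auto
    ultimately show "z = y" by (metis doubleton_eq_iff)
  qed
  show ?thesis using v yv y uniq by blast
qed



lemma tdw_subtree_conn:
  assumes "tree_decomp_width G T B k" "v \<in> verts G"
  shows "\<forall>a\<in>{t \<in> verts T. v \<in> B t}. \<forall>b\<in>{t \<in> verts T. v \<in> B t}.
          (a,b) \<in> (rel (edges T) {t \<in> verts T. v \<in> B t})\<^sup>*"
  using assms unfolding tree_decomp_width_def conn_induced[symmetric] by blast

lemma remove_vertex: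
  assumes g: "is_graph G" and d: "tree_decomp_width G T B k"
    and v: "v \<in> verts G" and t: "t \<in> verts T" and only: "\<forall>s\<in>verts T. v \<in> B s \<longrightarrow> s = t"
  shows "tree_decomp_width (induced G (verts G - {v})) T (\<lambda>s. B s - {v}) k"
    and "card {e\<in>edges G. v \<in> e} \<le> k"
proof -
  have fV: "finite (verts G)" using g by (simp add: is_graph_def)
  have bags: "\<forall>s\<in>verts T. B s \<subseteq> verts G \<and> card (B s) \<le> k + 1"
    and un: "(\<Union>s\<in>verts T. B s) = verts G"
    and ed: "\<forall>e\<in>edges G. \<exists>s\<in>verts T. e \<subseteq> B s"
    and sub: "\<forall>u\<in>verts G. connected_graph (induced T {s \<in> verts T. u \<in> B s})"
    and tr: "is_tree T"
    using d by (auto simp: tree_decomp_width_def)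
  have vt: "v \<in> B t" using un v only by auto
  have fBt: "finite (B t)" using bags t fV finite_subset by blast
  show "tree_decomp_width (induced G (verts G - {v})) T (\<lambda>s. B s - {v}) k"
    unfolding tree_decomp_width_def
  proof (intro conjI)
    show "is_tree T" by fact
    show "\<forall>s\<in>verts T. B s - {v} \<subseteq> verts (induced G (verts G - {v})) \<and> card (B s - {v}) \<le> k + 1"
    proof
      fix s assume s: "s \<in> verts T"
      have "finite (B s)" using bags s fV finite_subset by blast
      then have "card (B s - {v}) \<le> card (B s)" by (simp add: card_Diff1_le)
      then show "B s - {v} \<subseteq> verts (induced G (verts G - {v})) \<and> card (B s - {v}) \<le> k + 1"
        using bags s by auto
    qed
    show "(\<Union>s\<in>verts T. B s - {v}) = verts (induced G (verts G - {v}))"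
      using un by auto
    show "\<forall>e\<in>edges (induced G (verts G - {v})). \<exists>s\<in>verts T. e \<subseteq> B s - {v}"
      using ed by fastforce
    show "\<forall>u\<in>verts (induced G (verts G - {v})). connected_graph (induced T {s \<in> verts T. u \<in> B s - {v}})"
    proof
      fix u assume "u \<in> verts (induced G (verts G - {v}))"
      then have u: "u \<in> verts G" "u \<noteq> v" by auto
      have "{s \<in> verts T. u \<in> B s - {v}} = {s \<in> verts T. u \<in> B s}" using u by auto
      then show "connected_graph (induced T {s \<in> verts T. u \<in> B s - {v}})" using sub u by simp
    qed
  qed
  have "{e\<in>edges G. v \<in> e} \<subseteq> (\<lambda>u. {v,u}) ` (B t - {v})"
  proof
    fix e assume e: "e \<in> {e\<in>edges G. v \<in> e}"
    then obtain s where s: "s \<in> verts T" "e \<subseteq> B s" using ed by auto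
    then have "s = t" using only e by auto
    have "card e = 2" using e edge_card2[OF g] by auto
    then obtain a b where ab: "e = {a,b}" "a \<noteq> b" by (meson card_2_iff)
    show "e \<in> (\<lambda>u. {v,u}) ` (B t - {v})"
    proof (cases "a = v")
      case True
      then show ?thesis using ab s \<open>s = t\<close> by auto
    next
      case False
      then have "b = v" using e ab by auto
      then show ?thesis using ab s \<open>s = t\<close> False by (auto simp: insert_commute)
    qed
  qed
  then have "card {e\<in>edges G. v \<in> e} \<le> card ((\<lambda>u. {v,u}) ` (B t - {v}))"
    using fBt by (intro card_mono) auto
  also have "\<dots> \<le> card (B t - {v})" by (rule card_image_le) (use fBt in simp)
  also have "\<dots> = card (B t) - 1" using vt fBt by simp
  also have "\<dots> \<le> k" using bags t by auto
  finally show "card {e\<in>edges G. v \<in> e} \<le> k" .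
qed

lemma remove_leaf:
  assumes g: "is_graph G" and d: "tree_decomp_width G T B k"
    and l: "l \<in> verts T" and pl: "p \<noteq> l" and lp: "{l,p} \<in> edges T"
    and leaf: "\<forall>y. {l,y} \<in> edges T \<longrightarrow> y = p" and Bsub: "B l \<subseteq> B p"
  shows "tree_decomp_width G (induced T (verts T - {l})) B k"
    and "card (verts (induced T (verts T - {l}))) < card (verts T)"
proof -
  have bags: "\<forall>s\<in>verts T. B s \<subseteq> verts G \<and> card (B s) \<le> k + 1"
    and un: "(\<Union>s\<in>verts T. B s) = verts G"
    and ed: "\<forall>e\<in>edges G. \<exists>s\<in>verts T. e \<subseteq> B s"
    and sub: "\<forall>u\<in>verts G. connected_graph (induced T {s \<in> verts T. u \<in> B s})"
    and tr: "is_tree T"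
    using d by (auto simp: tree_decomp_width_def)
  have gT: "is_graph T" using tr by (simp add: is_tree_def)
  have fVT: "finite (verts T)" using gT by (simp add: is_graph_def)
  have fET: "finite (edges T)" using finite_edges[OF gT] .
  have p: "p \<in> verts T" using edge_sub[OF gT lp] by auto
  show "card (verts (induced T (verts T - {l}))) < card (verts T)"
  proof -
    have "card (verts T) > 0" using l fVT by (auto simp: card_gt_0_iff)
    moreover have "card (verts T - {l}) = card (verts T) - 1" using l fVT by simp
    ultimately show ?thesis by simp
  qed
  let ?T' = "induced T (verts T - {l})"
  have ET': "edges ?T' = edges T - {{l,p}}"
  proof (rule set_eqI)
    fix e
    show "e \<in> edges ?T' \<longleftrightarrow> e \<in> edges T - {{l,p}}"
    proof
      assume "e \<in> edges ?T'"
      then show "e \<in> edges T - {{l,p}}" by auto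
    next
      assume e: "e \<in> edges T - {{l,p}}"
      have "l \<notin> e"
      proof
        assume le: "l \<in> e"
        have "card e = 2" using e edge_card2[OF gT] by auto
        then obtain a b where ab: "e = {a,b}" "a \<noteq> b" by (meson card_2_iff)
        then have "\<exists>y. e = {l,y}" using le by (auto simp: insert_commute)
        then obtain y where "e = {l,y}" by blast
        then have "y = p" using leaf e by auto
        then show False using e \<open>e = {l,y}\<close> by auto
      qed
      then show "e \<in> edges ?T'" using e edge_sub[OF gT] by auto
    qed
  qed
  have connT: "\<forall>u\<in>verts T. \<forall>v\<in>verts T. (u,v) \<in> (rel (edges T) (verts T))\<^sup>*"
    using tr conn_self[OF gT] conn_induced by (simp add: is_tree_def)
  show "tree_decomp_width G ?T' B k"
    unfolding tree_decomp_width_def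
  proof (intro conjI)
    show "is_tree ?T'"
      unfolding is_tree_def
    proof (intro conjI)
      show "is_graph ?T'" using is_graph_induced[OF gT] by auto
      show "verts ?T' \<noteq> {}" using p pl by auto
      show "connected_graph ?T'"
        unfolding conn_induced using leaf_conn[OF connT leaf] by simp
      have "card (edges ?T') = card (edges T) - 1" using ET' lp fET by simp
      moreover have "card (verts ?T') = card (verts T) - 1" using l fVT by simp
      moreover have "card (edges T) + 1 = card (verts T)" using tr by (simp add: is_tree_def)
      moreover have "card (edges T) \<ge> 1" using lp fET
        by (auto simp: Suc_le_eq card_gt_0_iff)
      ultimately show "card (edges ?T') + 1 = card (verts ?T')" by simp
    qed
    show "\<forall>t\<in>verts ?T'. B t \<subseteq> verts G \<and> card (B t) \<le> k + 1" using bags by auto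
    show "(\<Union>t\<in>verts ?T'. B t) = verts G"
    proof
      show "(\<Union>t\<in>verts ?T'. B t) \<subseteq> verts G" using un by auto
      show "verts G \<subseteq> (\<Union>t\<in>verts ?T'. B t)"
      proof
        fix x assume "x \<in> verts G"
        then obtain s where s: "s \<in> verts T" "x \<in> B s" using un by auto
        show "x \<in> (\<Union>t\<in>verts ?T'. B t)"
        proof (cases "s = l")
          case True then show ?thesis using s Bsub p pl by auto
        next
          case False then show ?thesis using s by auto
        qed
      qed
    qed
    show "\<forall>e\<in>edges G. \<exists>t\<in>verts ?T'. e \<subseteq> B t"
    proof
      fix e assume "e \<in> edges G"
      then obtain s where s: "s \<in> verts T" "e \<subseteq> B s" using ed by auto
      show "\<exists>t\<in>verts ?T'. e \<subseteq> B t"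
      proof (cases "s = l")
        case True then show ?thesis using s Bsub p pl by (intro bexI[of _ p]) auto
      next
        case False then show ?thesis using s by auto
      qed
    qed
    show "\<forall>v\<in>verts G. connected_graph (induced ?T' {t \<in> verts ?T'. v \<in> B t})"
    proof
      fix v assume v: "v \<in> verts G"
      let ?S = "{t \<in> verts T. v \<in> B t}"
      have eq: "{t \<in> verts ?T'. v \<in> B t} = ?S - {l}" by auto
      have "induced ?T' (?S - {l}) = induced T (?S - {l})"
        by (rule induced_induced) auto
      moreover have "connected_graph (induced T (?S - {l}))"
        unfolding conn_induced using leaf_conn[OF tdw_subtree_conn[OF d v] leaf] by simp
      ultimately show "connected_graph (induced ?T' {t \<in> verts ?T'. v \<in> B t})"
        using eq by simp
    qed
  qed
qed

theorem tw_edges: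
  assumes "is_graph G" "tree_decomp_width G T B k"
  shows "card (edges G) \<le> k * card (verts G)"
  using assms
proof (induction "card (verts T) + card (verts G)" arbitrary: G T B rule: less_induct)
  case less
  have g: "is_graph G" and d: "tree_decomp_width G T B k" using less.prems by auto
  have fV: "finite (verts G)" using g by (simp add: is_graph_def)
  have bags: "\<forall>s\<in>verts T. B s \<subseteq> verts G \<and> card (B s) \<le> k + 1"
    and un: "(\<Union>s\<in>verts T. B s) = verts G"
    and tr: "is_tree T"
    using d by (auto simp: tree_decomp_width_def)
  have gT: "is_graph T" using tr by (simp add: is_tree_def)
  have fVT: "finite (verts T)" using gT by (simp add: is_graph_def)
  show ?case
  proof (cases "verts G = {}")
    case True
    then have "edges G = {}" using edge_sub[OF g] edge_card2[OF g] by fastforce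
    then show ?thesis by simp
  next
    case False
    show ?thesis
    proof (cases "\<exists>v\<in>verts G. \<exists>t\<in>verts T. \<forall>s\<in>verts T. v \<in> B s \<longrightarrow> s = t")
      case True
      then obtain v t where v: "v \<in> verts G" and t: "t \<in> verts T"
        and only: "\<forall>s\<in>verts T. v \<in> B s \<longrightarrow> s = t" by blast
      let ?G' = "induced G (verts G - {v})"
      have d': "tree_decomp_width ?G' T (\<lambda>s. B s - {v}) k"
        using remove_vertex(1)[OF g d v t only] .
      have deg: "card {e\<in>edges G. v \<in> e} \<le> k" using remove_vertex(2)[OF g d v t only] .
      have g': "is_graph ?G'" using is_graph_induced[OF g] by auto
      have cV': "card (verts ?G') = card (verts G) - 1" using v fV by simp
      have "card (verts G) > 0" using v fV by (auto simp: card_gt_0_iff)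
      then have "card (verts ?G') < card (verts G)" using cV' by simp
      then have IH: "card (edges ?G') \<le> k * card (verts ?G')"
        using less.hyps[OF _ g' d'] by simp
      have "edges G \<subseteq> edges ?G' \<union> {e\<in>edges G. v \<in> e}"
        using edge_sub[OF g] by auto
      then have "card (edges G) \<le> card (edges ?G' \<union> {e\<in>edges G. v \<in> e})"
        using finite_edges[OF g] by (intro card_mono) auto
      also have "\<dots> \<le> card (edges ?G') + card {e\<in>edges G. v \<in> e}" by (rule card_Un_le)
      also have "\<dots> \<le> k * (card (verts G) - 1) + k" using IH deg cV' by simp
      also have "\<dots> = k * card (verts G)"
      proof -
        have "card (verts G) \<ge> 1" using v fV by (auto simp: Suc_le_eq card_gt_0_iff)
        then show ?thesis by (cases "card (verts G)") auto
      qed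
      finally show ?thesis .
    next
      case False2: False
      obtain v where v: "v \<in> verts G" using False by auto
      obtain t where t: "t \<in> verts T" "v \<in> B t" using un v by auto
      obtain s where s: "s \<in> verts T" "v \<in> B s" "s \<noteq> t" using False2 v t by blast
      have "card {s,t} \<le> card (verts T)" using s t fVT by (intro card_mono) auto
      then have "card (verts T) \<ge> 2" using s by simp
      then obtain l p where l: "l \<in> verts T" and pl: "p \<noteq> l" and lp: "{l,p} \<in> edges T"
        and leaf: "\<forall>y. {l,y} \<in> edges T \<longrightarrow> y = p"
        using leaf_exists[OF tr] by blast
      have Bsub: "B l \<subseteq> B p"
      proof
        fix x assume x: "x \<in> B l"
        then have xV: "x \<in> verts G" using bags l by auto
        obtain s' where s': "s' \<in> verts T" "x \<in> B s'" "s' \<noteq> l" using False2 xV l by blast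
        have "(l, s') \<in> (rel (edges T) {t \<in> verts T. x \<in> B t})\<^sup>*"
          using tdw_subtree_conn[OF d xV] l x s' by auto
        from first_step[OF this] s'(3) obtain y where
          "(l,y) \<in> rel (edges T) {t \<in> verts T. x \<in> B t}" by auto
        then have "{l,y} \<in> edges T" "x \<in> B y" by (auto simp: rel_def)
        then show "x \<in> B p" using leaf by auto
      qed
      let ?T' = "induced T (verts T - {l})"
      have d': "tree_decomp_width G ?T' B k" using remove_leaf(1)[OF g d l pl lp leaf Bsub] .
      have "card (verts ?T') < card (verts T)" using remove_leaf(2)[OF g d l pl lp leaf Bsub] .
      then show ?thesis using less.hyps[OF _ g d'] by simp
    qed
  qed
qed

lemma tdw_hered:
  assumes g: "is_graph G" and d: "tree_decomp_width G T B k" and A: "A \<subseteq> verts G"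
  shows "tree_decomp_width (induced G A) T (\<lambda>t. B t \<inter> A) k"
proof -
  have fV: "finite (verts G)" using g by (simp add: is_graph_def)
  have bags: "\<forall>s\<in>verts T. B s \<subseteq> verts G \<and> card (B s) \<le> k + 1"
    and un: "(\<Union>s\<in>verts T. B s) = verts G"
    and ed: "\<forall>e\<in>edges G. \<exists>s\<in>verts T. e \<subseteq> B s"
    and sub: "\<forall>u\<in>verts G. connected_graph (induced T {s \<in> verts T. u \<in> B s})"
    and tr: "is_tree T"
    using d by (auto simp: tree_decomp_width_def)
  show ?thesis
    unfolding tree_decomp_width_def
  proof (intro conjI)
    show "is_tree T" by fact
    show "\<forall>t\<in>verts T. B t \<inter> A \<subseteq> verts (induced G A) \<and> card (B t \<inter> A) \<le> k + 1"
    proof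
      fix t assume t: "t \<in> verts T"
      have "finite (B t)" using bags t fV finite_subset by blast
      then have "card (B t \<inter> A) \<le> card (B t)" by (simp add: card_mono)
      then show "B t \<inter> A \<subseteq> verts (induced G A) \<and> card (B t \<inter> A) \<le> k + 1" using bags t by auto
    qed
    show "(\<Union>t\<in>verts T. B t \<inter> A) = verts (induced G A)" using un A by auto
    show "\<forall>e\<in>edges (induced G A). \<exists>t\<in>verts T. e \<subseteq> B t \<inter> A" using ed by fastforce
    show "\<forall>v\<in>verts (induced G A). connected_graph (induced T {t \<in> verts T. v \<in> B t \<inter> A})"
    proof
      fix v assume "v \<in> verts (induced G A)"
      then have v: "v \<in> A" by simp
      have "{t \<in> verts T. v \<in> B t \<inter> A} = {t \<in> verts T. v \<in> B t}" using v by auto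
      then show "connected_graph (induced T {t \<in> verts T. v \<in> B t \<inter> A})" using sub v A by auto
    qed
  qed
qed

theorem sparse:
  assumes "is_graph G" "treewidth_le G k" "A \<subseteq> verts G"
  shows "card (edges (induced G A)) \<le> k * card A"
proof -
  obtain T B where "tree_decomp_width G T B k" using assms(2) by (auto simp: treewidth_le_def)
  then have "tree_decomp_width (induced G A) T (\<lambda>t. B t \<inter> A) k" using tdw_hered assms by blast
  from tw_edges[OF is_graph_induced[OF assms(1,3)] this] show ?thesis by simp
qed



definition P2 :: "nat set \<Rightarrow> nat set set" where
  "P2 X = {e. e \<subseteq> X \<and> card e = 2}"

lemma graph_eq: "G = (verts G, edges G)"
  by (simp add: verts_def edges_def)

lemma graphs_on_eq: "graphs_on n = (\<lambda>E. ({0..<n}, E)) ` Pow (P2 {0..<n})"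
proof (rule set_eqI)
  fix G
  show "G \<in> graphs_on n \<longleftrightarrow> G \<in> (\<lambda>E. ({0..<n}, E)) ` Pow (P2 {0..<n})"
  proof
    assume "G \<in> graphs_on n"
    then have "is_graph G" "verts G = {0..<n}" by (auto simp: graphs_on_def)
    then have "edges G \<in> Pow (P2 {0..<n})" by (auto simp: is_graph_def P2_def)
    moreover have "G = (\<lambda>E. ({0..<n}::nat set, E)) (edges G)"
      using graph_eq[of G] \<open>verts G = {0..<n}\<close> by simp
    ultimately show "G \<in> (\<lambda>E. ({0..<n}, E)) ` Pow (P2 {0..<n})" by (rule rev_image_eqI)
  next
    assume "G \<in> (\<lambda>E. ({0..<n}, E)) ` Pow (P2 {0..<n})"
    then obtain E where "E \<subseteq> P2 {0..<n}" "G = ({0..<n}, E)" by auto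
    then show "G \<in> graphs_on n"
      unfolding graphs_on_def is_graph_def verts_def edges_def P2_def by fastforce
  qed
qed

lemma card_P2: "finite X \<Longrightarrow> card (P2 X) = card X choose 2"
  unfolding P2_def by (rule n_subsets)

lemma finite_P2: "finite X \<Longrightarrow> finite (P2 X)"
  unfolding P2_def by simp

lemma card_graphs_on: "card (graphs_on n) = 2 ^ (n choose 2)"
proof -
  have "inj_on (\<lambda>E. ({0..<n}::nat set, E)) (Pow (P2 {0..<n}))" by (auto simp: inj_on_def)
  then have "card (graphs_on n) = card (Pow (P2 {0..<n}))"
    unfolding graphs_on_eq by (rule card_image)
  also have "\<dots> = 2 ^ (n choose 2)" using card_P2[of "{0..<n}"] finite_P2[of "{0..<n}"]
    by (simp add: card_Pow)
  finally show ?thesis .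
qed

lemma finite_graphs_on: "finite (graphs_on n)"
  unfolding graphs_on_eq using finite_P2[of "{0..<n}"] by simp

lemma iso_refl: "graph_iso G G"
  unfolding graph_iso_def by (intro exI[of _ id]) auto

lemma iso_sym: assumes "graph_iso G H" shows "graph_iso H G"
proof -
  obtain f where f: "bij_betw f (verts G) (verts H)"
    and e: "\<forall>u\<in>verts G. \<forall>v\<in>verts G. {u, v} \<in> edges G \<longleftrightarrow> {f u, f v} \<in> edges H"
    using assms by (auto simp: graph_iso_def)
  let ?g = "inv_into (verts G) f"
  have g: "bij_betw ?g (verts H) (verts G)" using f by (rule bij_betw_inv_into)
  have "\<forall>u\<in>verts H. \<forall>v\<in>verts H. {u, v} \<in> edges H \<longleftrightarrow> {?g u, ?g v} \<in> edges G"
  proof (intro ballI)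
    fix u v assume u: "u \<in> verts H" and v: "v \<in> verts H"
    have gu: "?g u \<in> verts G" "f (?g u) = u"
      by (rule bij_betw_apply[OF g u]) (rule bij_betw_inv_into_right[OF f u])
    have gv: "?g v \<in> verts G" "f (?g v) = v"
      by (rule bij_betw_apply[OF g v]) (rule bij_betw_inv_into_right[OF f v])
    have "{?g u, ?g v} \<in> edges G \<longleftrightarrow> {f (?g u), f (?g v)} \<in> edges H"
      using e gu gv by blast
    then show "{u, v} \<in> edges H \<longleftrightarrow> {?g u, ?g v} \<in> edges G" using gu gv by simp
  qed
  then show ?thesis using g unfolding graph_iso_def by blast
qed

lemma iso_trans: assumes "graph_iso G H" "graph_iso H K" shows "graph_iso G K"
proof -
  obtain f where f: "bij_betw f (verts G) (verts H)"
    and e: "\<forall>u\<in>verts G. \<forall>v\<in>verts G. {u, v} \<in> edges G \<longleftrightarrow> {f u, f v} \<in> edges H"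
    using assms by (auto simp: graph_iso_def)
  obtain g where g: "bij_betw g (verts H) (verts K)"
    and e2: "\<forall>u\<in>verts H. \<forall>v\<in>verts H. {u, v} \<in> edges H \<longleftrightarrow> {g u, g v} \<in> edges K"
    using assms by (auto simp: graph_iso_def)
  have "bij_betw (g \<circ> f) (verts G) (verts K)" using f g by (rule bij_betw_trans)
  moreover have "\<forall>u\<in>verts G. \<forall>v\<in>verts G. {u, v} \<in> edges G \<longleftrightarrow> {(g \<circ> f) u, (g \<circ> f) v} \<in> edges K"
  proof (intro ballI)
    fix u v assume u: "u \<in> verts G" and v: "v \<in> verts G"
    have "f u \<in> verts H" "f v \<in> verts H"
      by (rule bij_betw_apply[OF f u]) (rule bij_betw_apply[OF f v])
    then show "{u, v} \<in> edges G \<longleftrightarrow> {(g \<circ> f) u, (g \<circ> f) v} \<in> edges K" using e e2 u v by simp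
  qed
  ultimately show ?thesis unfolding graph_iso_def by blast
qed

lemma equiv_iso: "equiv (graphs_on n) (iso_rel n)"
proof (rule equivI)
  show "iso_rel n \<subseteq> graphs_on n \<times> graphs_on n" by (auto simp: iso_rel_def)
  show "refl_on (graphs_on n) (iso_rel n)"
    by (rule refl_onI) (auto simp: iso_rel_def iso_refl)
  show "sym (iso_rel n)"
    by (rule symI) (auto simp: iso_rel_def iso_sym)
  show "trans (iso_rel n)"
    by (rule transI) (auto simp: iso_rel_def intro: iso_trans)
qed

definition relabel :: "(nat \<Rightarrow> nat) \<Rightarrow> graph \<Rightarrow> graph" where
  "relabel p G = (verts G, (\<lambda>e. p ` e) ` edges G)"

lemma class_sub:
  assumes G: "G \<in> graphs_on n"
  shows "iso_rel n `` {G} \<subseteq> (\<lambda>p. relabel p G) ` {p. p permutes {0..<n}}"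
proof
  fix H assume "H \<in> iso_rel n `` {G}"
  then have H: "H \<in> graphs_on n" and iso: "graph_iso G H" by (auto simp: iso_rel_def)
  have gG: "is_graph G" "verts G = {0..<n}" using G by (auto simp: graphs_on_def)
  have gH: "is_graph H" "verts H = {0..<n}" using H by (auto simp: graphs_on_def)
  obtain f where f: "bij_betw f (verts G) (verts H)"
    and e: "\<forall>u\<in>verts G. \<forall>v\<in>verts G. {u, v} \<in> edges G \<longleftrightarrow> {f u, f v} \<in> edges H"
    using iso by (auto simp: graph_iso_def)
  define p where "p = (\<lambda>x. if x \<in> {0..<n} then f x else x)"
  have bf: "bij_betw f {0..<n} {0..<n}" using f gG gH by simp
  have bp: "bij_betw p {0..<n} {0..<n}"
    using bij_betw_cong[of "{0..<n}" p f "{0..<n}"] bf by (simp add: p_def)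
  have pp: "p permutes {0..<n}"
    by (rule bij_imp_permutes[OF bp]) (simp add: p_def)
  have "edges H = (\<lambda>e. p ` e) ` edges G"
  proof
    show "edges H \<subseteq> (\<lambda>e. p ` e) ` edges G"
    proof
      fix e assume eH: "e \<in> edges H"
      have "card e = 2" using edge_card2[OF gH(1) eH] .
      then obtain a b where ab: "e = {a,b}" by (meson card_2_iff)
      have "a \<in> verts H" "b \<in> verts H" using edge_sub[OF gH(1) eH] ab by auto
      moreover have "f ` verts G = verts H" by (rule bij_betw_imp_surj_on[OF f])
      ultimately obtain u w where uw: "u \<in> verts G" "w \<in> verts G" "a = f u" "b = f w"
        by blast
      have "{u,w} \<in> edges G" using e uw eH ab by auto
      moreover have "p ` {u,w} = e" using uw ab gG by (auto simp: p_def)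
      ultimately show "e \<in> (\<lambda>e. p ` e) ` edges G" by blast
    qed
    show "(\<lambda>e. p ` e) ` edges G \<subseteq> edges H"
    proof
      fix e' assume "e' \<in> (\<lambda>e. p ` e) ` edges G"
      then obtain e where eG: "e \<in> edges G" and e': "e' = p ` e" by auto
      have "card e = 2" using edge_card2[OF gG(1) eG] .
      then obtain u w where uw: "e = {u,w}" by (meson card_2_iff)
      have "u \<in> verts G" "w \<in> verts G" using edge_sub[OF gG(1) eG] uw by auto
      then have "{f u, f w} \<in> edges H" using e eG uw by auto
      moreover have "e' = {f u, f w}" using e' uw \<open>u \<in> verts G\<close> \<open>w \<in> verts G\<close> gG by (auto simp: p_def)
      ultimately show "e' \<in> edges H" by simp
    qed
  qed
  then have "H = relabel p G" using graph_eq[of H] gG gH by (simp add: relabel_def)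
  then show "H \<in> (\<lambda>p. relabel p G) ` {p. p permutes {0..<n}}" using pp by auto
qed

lemma class_card:
  assumes G: "G \<in> graphs_on n"
  shows "card (iso_rel n `` {G}) \<le> fact n"
proof -
  have fin: "finite {p. p permutes {0..<n::nat}}" by (rule finite_permutations) simp
  have "card (iso_rel n `` {G}) \<le> card ((\<lambda>p. relabel p G) ` {p. p permutes {0..<n}})"
    using class_sub[OF G] fin by (intro card_mono) auto
  also have "\<dots> \<le> card {p. p permutes {0..<n::nat}}" using fin by (rule card_image_le)
  also have "\<dots> = fact n" by (rule card_permutations) auto
  finally show ?thesis .
qed

lemma finite_classes: "finite (iso_classes n)"
proof -
  have "\<Union>(iso_classes n) = graphs_on n"
    unfolding iso_classes_def using equiv_iso[of n] by (rule Union_quotient)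
  then have "iso_classes n \<subseteq> Pow (graphs_on n)" by blast
  moreover have "finite (Pow (graphs_on n))" using finite_graphs_on by simp
  ultimately show ?thesis by (rule finite_subset)
qed

lemma classes_lower: "2 ^ (n choose 2) \<le> fact n * card (iso_classes n)"
proof -
  have "2 ^ (n choose 2) = card (\<Union>(iso_classes n))"
    using card_graphs_on Union_quotient[OF equiv_iso[of n]] by (simp add: iso_classes_def)
  also have "\<dots> \<le> (\<Sum>C\<in>iso_classes n. card C)" by (rule card_Union_le_sum_card)
  also have "\<dots> \<le> (\<Sum>C\<in>iso_classes n. fact n)"
  proof (rule sum_mono)
    fix C assume "C \<in> iso_classes n"
    then obtain G where "G \<in> graphs_on n" "C = iso_rel n `` {G}"
      unfolding iso_classes_def by (auto elim: quotientE)
    then show "card C \<le> fact n" using class_card by simp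
  qed
  also have "\<dots> = fact n * card (iso_classes n)" by simp
  finally show ?thesis .
qed



lemma card_small_subsets:
  assumes fX: "finite X"
  shows "card {F. F \<subseteq> X \<and> card F \<le> K} \<le> (card X + 1) ^ K"
proof -
  let ?Y = "insert None (Some ` X)"
  let ?L = "{xs. set xs \<subseteq> ?Y \<and> length xs = K}"
  let ?g = "\<lambda>xs. {x. Some x \<in> set xs}"
  have fY: "finite ?Y" using fX by simp
  have cY: "card ?Y = card X + 1" using fX by (simp add: card_image)
  have "{F. F \<subseteq> X \<and> card F \<le> K} \<subseteq> ?g ` ?L"
  proof
    fix F assume F: "F \<in> {F. F \<subseteq> X \<and> card F \<le> K}"
    then have fF: "finite F" using fX finite_subset by blast
    obtain xs where xs: "set xs = F" "distinct xs" using finite_distinct_list[OF fF] by blast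
    have lx: "length xs = card F" using distinct_card[OF xs(2)] xs(1) by simp
    define ys where "ys = map Some xs @ replicate (K - length xs) None"
    have "length ys = K" using lx F by (simp add: ys_def)
    moreover have "set ys \<subseteq> ?Y" using xs F by (auto simp: ys_def)
    moreover have "?g ys = F" using xs by (auto simp: ys_def)
    ultimately show "F \<in> ?g ` ?L" by blast
  qed
  then have "card {F. F \<subseteq> X \<and> card F \<le> K} \<le> card (?g ` ?L)"
    using fY by (intro card_mono) (auto intro: finite_lists_length_eq)
  also have "\<dots> \<le> card ?L" using fY by (intro card_image_le) (rule finite_lists_length_eq)
  also have "\<dots> = (card X + 1) ^ K" using card_lists_length_eq[OF fY] cY by simp
  finally show ?thesis .
qed

definition Bad :: "nat \<Rightarrow> nat \<Rightarrow> nat \<Rightarrow> graph set" where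
  "Bad n m k = {G \<in> graphs_on n. \<exists>A. A \<subseteq> {0..<n} \<and> card A = m \<and> card (edges (induced G A)) \<le> k * m}"

lemma P2_mono: "A \<subseteq> B \<Longrightarrow> P2 A \<subseteq> P2 B"
  by (auto simp: P2_def)

lemma card_W:
  assumes A: "A \<subseteq> {0..<n}" and F: "F \<subseteq> P2 A"
  shows "card {G \<in> graphs_on n. edges (induced G A) = F} \<le> 2 ^ ((n choose 2) - (card A choose 2))"
proof -
  let ?V = "{0..<n}::nat set"
  have fA: "finite A" using A finite_subset by blast
  have "{G \<in> graphs_on n. edges (induced G A) = F} \<subseteq> (\<lambda>E'. (?V, F \<union> E')) ` Pow (P2 ?V - P2 A)"
  proof
    fix G assume G: "G \<in> {G \<in> graphs_on n. edges (induced G A) = F}"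
    then have gG: "is_graph G" "verts G = ?V" and eF: "{e \<in> edges G. e \<subseteq> A} = F"
      by (auto simp: graphs_on_def)
    have EP: "edges G \<subseteq> P2 ?V" using gG by (auto simp: is_graph_def P2_def)
    have "edges G = F \<union> (edges G - P2 A)"
    proof
      show "edges G \<subseteq> F \<union> (edges G - P2 A)" using eF by (auto simp: P2_def)
      show "F \<union> (edges G - P2 A) \<subseteq> edges G" using eF by auto
    qed
    then have "G = (?V, F \<union> (edges G - P2 A))" using graph_eq[of G] gG by simp
    moreover have "edges G - P2 A \<in> Pow (P2 ?V - P2 A)" using EP by auto
    ultimately show "G \<in> (\<lambda>E'. (?V, F \<union> E')) ` Pow (P2 ?V - P2 A)" by blast
  qed
  moreover have "finite (Pow (P2 ?V - P2 A))" using finite_P2[of ?V] by simp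
  ultimately have "card {G \<in> graphs_on n. edges (induced G A) = F} \<le> card ((\<lambda>E'. (?V, F \<union> E')) ` Pow (P2 ?V - P2 A))"
    by (intro card_mono) auto
  also have "\<dots> \<le> card (Pow (P2 ?V - P2 A))" by (rule card_image_le) (use finite_P2[of ?V] in simp)
  also have "\<dots> = 2 ^ card (P2 ?V - P2 A)" using finite_P2[of ?V] by (simp add: card_Pow)
  also have "card (P2 ?V - P2 A) = card (P2 ?V) - card (P2 A)"
    using card_Diff_subset[OF finite_subset[OF P2_mono[OF A] finite_P2[OF finite_atLeastLessThan]] P2_mono[OF A]] .
  also have "\<dots> = (n choose 2) - (card A choose 2)" using card_P2[of ?V] card_P2[OF fA] by simp
  finally show ?thesis .
qed

lemma card_Bad:
  "card (Bad n m k) \<le> (n choose m) * ((m choose 2) + 1) ^ (k * m) * 2 ^ ((n choose 2) - (m choose 2))"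
proof -
  let ?V = "{0..<n}::nat set"
  let ?M = "{A. A \<subseteq> ?V \<and> card A = m}"
  let ?SF = "\<lambda>A. {F. F \<subseteq> P2 A \<and> card F \<le> k * m}"
  let ?W = "\<lambda>A F. {G \<in> graphs_on n. edges (induced G A) = F}"
  let ?c = "2 ^ ((n choose 2) - (m choose 2))"
  have fM: "finite ?M" by simp
  have fSF: "finite (?SF A)" if "A \<in> ?M" for A
  proof -
    have "finite (P2 A)" using that by (intro finite_P2) (auto intro: finite_subset)
    then show ?thesis by simp
  qed
  have "Bad n m k \<subseteq> (\<Union>A\<in>?M. \<Union>F\<in>?SF A. ?W A F)"
  proof
    fix G assume "G \<in> Bad n m k"
    then obtain A where G: "G \<in> graphs_on n" and A: "A \<subseteq> ?V" "card A = m"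
      and c: "card (edges (induced G A)) \<le> k * m" by (auto simp: Bad_def)
    have gG: "is_graph G" using G by (simp add: graphs_on_def)
    have "edges (induced G A) \<subseteq> P2 A" using gG by (auto simp: P2_def is_graph_def)
    then show "G \<in> (\<Union>A\<in>?M. \<Union>F\<in>?SF A. ?W A F)" using A c G by blast
  qed
  moreover have "finite (\<Union>A\<in>?M. \<Union>F\<in>?SF A. ?W A F)"
    using fM fSF finite_graphs_on by auto
  ultimately have "card (Bad n m k) \<le> card (\<Union>A\<in>?M. \<Union>F\<in>?SF A. ?W A F)" by (rule card_mono[rotated])
  also have "\<dots> \<le> (\<Sum>A\<in>?M. card (\<Union>F\<in>?SF A. ?W A F))" by (rule card_UN_le) (rule fM)
  also have "\<dots> \<le> (\<Sum>A\<in>?M. ((m choose 2) + 1) ^ (k * m) * ?c)"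
  proof (rule sum_mono)
    fix A assume A: "A \<in> ?M"
    have fA: "finite A" using A finite_subset by blast
    have "card (\<Union>F\<in>?SF A. ?W A F) \<le> (\<Sum>F\<in>?SF A. card (?W A F))" by (rule card_UN_le) (rule fSF[OF A])
    also have "\<dots> \<le> (\<Sum>F\<in>?SF A. ?c)"
    proof (rule sum_mono)
      fix F assume "F \<in> ?SF A"
      then show "card (?W A F) \<le> ?c" using card_W[of A n F] A by auto
    qed
    also have "\<dots> = card (?SF A) * ?c" by simp
    also have "\<dots> \<le> ((m choose 2) + 1) ^ (k * m) * ?c"
      using card_small_subsets[OF finite_P2[OF fA], of "k*m"] card_P2[OF fA] A by simp
    finally show "card (\<Union>F\<in>?SF A. ?W A F) \<le> ((m choose 2) + 1) ^ (k * m) * ?c" .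
  qed
  also have "\<dots> = card ?M * (((m choose 2) + 1) ^ (k * m) * ?c)" by simp
  also have "card ?M = n choose m" using n_subsets[of ?V m] by simp
  finally show ?thesis by (simp add: mult.assoc)
qed

definition PB :: "nat \<Rightarrow> nat \<Rightarrow> nat poly set" where
  "PB n m = {p. \<forall>j. coeff p j \<le> 2 ^ n \<and> (m \<le> j \<longrightarrow> coeff p j = 0)}"

lemma PB_bound: "finite (PB n m) \<and> card (PB n m) \<le> (2 ^ n + 1) ^ m"
proof -
  let ?f = "\<lambda>p. restrict (coeff p) {0..<m}"
  let ?T = "PiE {0..<m} (\<lambda>_. {0..(2::nat)^n})"
  have inj: "inj_on ?f (PB n m)"
  proof (rule inj_onI)
    fix p q assume p: "p \<in> PB n m" and q: "q \<in> PB n m" and e: "?f p = ?f q"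
    show "p = q"
    proof (rule poly_eqI)
      fix j
      show "coeff p j = coeff q j"
      proof (cases "j < m")
        case True
        then show ?thesis using fun_cong[OF e, of j] by simp
      next
        case False
        then show ?thesis using p q by (auto simp: PB_def)
      qed
    qed
  qed
  have sub: "?f ` PB n m \<subseteq> ?T" by (auto simp: PB_def)
  have fT: "finite ?T" by (intro finite_PiE) auto
  have cT: "card ?T = (2 ^ n + 1) ^ m" by (simp add: card_PiE)
  have fin: "finite (PB n m)" using finite_imageD[OF finite_subset[OF sub fT] inj] .
  have "card (PB n m) \<le> card ?T" using card_inj_on_le[OF inj sub fT] .
  then show ?thesis using fin cT by simp
qed

lemma coeff_P_class:
  assumes "is_graph G"
  shows "coeff (P_class Q G) j = card {A. A \<subseteq> verts G \<and> induced G A \<in> Q \<and> card A = j}"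
proof -
  let ?S = "{A. A \<subseteq> verts G \<and> induced G A \<in> Q}"
  have fS: "finite ?S" using assms by (auto simp: is_graph_def)
  have "coeff (P_class Q G) j = (\<Sum>A\<in>?S. coeff (monom 1 (card A)) j)"
    unfolding P_class_def by (rule coeff_sum)
  also have "\<dots> = (\<Sum>A\<in>?S. if card A = j then 1 else 0)"
    by (rule sum.cong) (auto simp: coeff_monom)
  also have "\<dots> = card {A\<in>?S. card A = j}" using fS by (simp add: sum.If_cases Int_def)
  also have "{A\<in>?S. card A = j} = {A. A \<subseteq> verts G \<and> induced G A \<in> Q \<and> card A = j}" by auto
  finally show ?thesis .
qed

lemma good_poly:
  assumes Qg: "Q \<subseteq> {G. is_graph G}" and Qt: "\<forall>G\<in>Q. treewidth_le G k"
    and G: "G \<in> graphs_on n" and nb: "G \<notin> Bad n m k"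
  shows "P_class Q G \<in> PB n m"
proof -
  have gG: "is_graph G" "verts G = {0..<n}" using G by (auto simp: graphs_on_def)
  show ?thesis unfolding PB_def
  proof (intro CollectI allI conjI impI)
    fix j
    have "card {A. A \<subseteq> verts G \<and> induced G A \<in> Q \<and> card A = j} \<le> card (Pow {0..<n})"
      using gG by (intro card_mono) auto
    then show "coeff (P_class Q G) j \<le> 2 ^ n" using coeff_P_class[OF gG(1)] by (simp add: card_Pow)
  next
    fix j assume mj: "m \<le> j"
    have emp: "{A. A \<subseteq> verts G \<and> induced G A \<in> Q \<and> card A = j} = {}"
    proof (rule ccontr)
      assume "\<not> ?thesis"
      then obtain A where A: "A \<subseteq> verts G" "induced G A \<in> Q" "card A = j" by auto
      obtain A' where A': "A' \<subseteq> A" "card A' = m" using obtain_subset_with_card_n[of m A] A mj by auto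
      have gA: "is_graph (induced G A)" using is_graph_induced[OF gG(1) A(1)] .
      have tw: "treewidth_le (induced G A) k" using Qt A by auto
      have "card (edges (induced (induced G A) A')) \<le> k * card A'"
        by (rule sparse[OF gA tw]) (simp add: A'(1))
      then have "card (edges (induced G A')) \<le> k * m" by (simp only: induced_induced[OF A'(1)] A'(2))
      moreover have "A' \<subseteq> {0..<n}" using A A' gG by auto
      ultimately have "G \<in> Bad n m k" using G A' by (auto simp: Bad_def)
      then show False using nb by simp
    qed
    show "coeff (P_class Q G) j = 0" by (simp only: coeff_P_class[OF gG(1)] emp card.empty)
  qed
qed

lemma class_of:
  assumes "C \<in> iso_classes n" "G \<in> C"
  shows "C = iso_rel n `` {G}"
proof -
  obtain G0 where G0: "G0 \<in> graphs_on n" "C = iso_rel n `` {G0}"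
    using assms(1) unfolding iso_classes_def by (auto elim: quotientE)
  then have "(G0, G) \<in> iso_rel n" using assms(2) by simp
  then show ?thesis using G0 equiv_class_eq[OF equiv_iso] by simp
qed

lemma class_sub_graphs: "C \<in> iso_classes n \<Longrightarrow> C \<subseteq> graphs_on n"
  unfolding iso_classes_def using Union_quotient[OF equiv_iso[of n]] by blast

lemma class_nonempty: "C \<in> iso_classes n \<Longrightarrow> C \<noteq> {}"
  unfolding iso_classes_def by (rule in_quotient_imp_non_empty[OF equiv_iso])

lemma unique_bound:
  assumes Qg: "Q \<subseteq> {G. is_graph G}" and Qt: "\<forall>G\<in>Q. treewidth_le G k"
  shows "card (unique_classes (P_class Q) n) \<le> card (Bad n m k) + card (PB n m)"
proof -
  let ?U = "unique_classes (P_class Q) n"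
  let ?U1 = "{C \<in> ?U. C \<inter> Bad n m k \<noteq> {}}"
  let ?U2 = "{C \<in> ?U. C \<inter> Bad n m k = {}}"
  let ?h = "\<lambda>C. P_class Q (SOME G. G \<in> C)"
  have fB: "finite (Bad n m k)" using finite_graphs_on by (auto simp: Bad_def)
  have U1s: "?U1 \<subseteq> (\<lambda>G. iso_rel n `` {G}) ` Bad n m k"
  proof
    fix C assume "C \<in> ?U1"
    then obtain G where C: "C \<in> iso_classes n" and G: "G \<in> C" "G \<in> Bad n m k"
      by (auto simp: unique_classes_def)
    then show "C \<in> (\<lambda>G. iso_rel n `` {G}) ` Bad n m k" using class_of[OF C G(1)] by blast
  qed
  have c1: "card ?U1 \<le> card (Bad n m k)"
    using card_mono[OF finite_imageI[OF fB] U1s] card_image_le[OF fB, of "\<lambda>G. iso_rel n `` {G}"] by linarith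
  have inj: "inj_on ?h ?U2"
  proof (rule inj_onI)
    fix C1 C2 assume C1: "C1 \<in> ?U2" and C2: "C2 \<in> ?U2" and e: "?h C1 = ?h C2"
    let ?G1 = "SOME G. G \<in> C1" and ?G2 = "SOME G. G \<in> C2"
    have cl1: "C1 \<in> iso_classes n" and cl2: "C2 \<in> iso_classes n" using C1 C2 by (auto simp: unique_classes_def)
    have G1: "?G1 \<in> C1" using class_nonempty[OF cl1] by (simp add: some_in_eq)
    have G2: "?G2 \<in> C2" using class_nonempty[OF cl2] by (simp add: some_in_eq)
    have u1: "P_unique (P_class Q) ?G1" using C1 G1 by (auto simp: unique_classes_def)
    have g1: "?G1 \<in> graphs_on n" using class_sub_graphs[OF cl1] G1 by auto
    have g2: "?G2 \<in> graphs_on n" using class_sub_graphs[OF cl2] G2 by auto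
    have gr2: "is_graph ?G2" using g2 by (simp add: graphs_on_def)
    from u1 have uu: "\<forall>H. is_graph H \<longrightarrow> P_class Q H = P_class Q ?G1 \<longrightarrow> graph_iso ?G1 H"
      by (simp only: P_unique_def)
    have "graph_iso ?G1 ?G2" using mp[OF mp[OF spec[OF uu, of ?G2] gr2] e[symmetric]] .
    then have "(?G1, ?G2) \<in> iso_rel n" using g1 g2 by (simp add: iso_rel_def)
    then have "iso_rel n `` {?G1} = iso_rel n `` {?G2}" using equiv_class_eq[OF equiv_iso] by simp
    then show "C1 = C2" using class_of[OF cl1 G1] class_of[OF cl2 G2] by simp
  qed
  have img: "?h ` ?U2 \<subseteq> PB n m"
  proof
    fix p assume "p \<in> ?h ` ?U2"
    then obtain C where C: "C \<in> ?U2" and p: "p = ?h C" by blast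
    have cl: "C \<in> iso_classes n" using C by (simp add: unique_classes_def)
    have G: "(SOME G. G \<in> C) \<in> C" using class_nonempty[OF cl] by (simp add: some_in_eq)
    have "(SOME G. G \<in> C) \<in> graphs_on n" using class_sub_graphs[OF cl] G by auto
    moreover have "(SOME G. G \<in> C) \<notin> Bad n m k" using C G by auto
    ultimately show "p \<in> PB n m" using good_poly[OF Qg Qt] p by blast
  qed
  have c2: "card ?U2 \<le> card (PB n m)" using card_inj_on_le[OF inj img conjunct1[OF PB_bound]] .
  have s1: "?U \<subseteq> ?U1 \<union> ?U2" by blast
  have s2: "?U \<subseteq> iso_classes n" unfolding unique_classes_def by blast
  have s3: "?U1 \<union> ?U2 \<subseteq> ?U" by blast
  have fU: "finite ?U" using finite_subset[OF s2 finite_classes] .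
  have "card ?U \<le> card (?U1 \<union> ?U2)"
    using card_mono[OF finite_subset[OF s3 fU] s1] .
  also have "\<dots> \<le> card ?U1 + card ?U2" by (rule card_Un_le)
  finally show ?thesis using c1 c2 by simp
qed



lemma choose2_real: "real (n choose 2) = real n * (real n - 1) / 2"
proof -
  have d: "2 dvd n * (n - 1)" by (cases "even n") auto
  have "real (n choose 2) = real (n * (n - 1) div 2)" by (simp add: choose_two)
  also have "\<dots> = real (n * (n - 1)) / 2" using real_of_nat_div[OF d] by simp
  also have "real (n * (n - 1)) = real n * (real n - 1)" by (cases n) (simp_all add: distrib_right)
  finally show ?thesis .
qed

definition fA :: "nat \<Rightarrow> nat \<Rightarrow> real" where
  "fA k n = real n powr (real n * (1 + 2 * real k)) * 2 powr (real n) / 2 powr ((real n - 3)*(real n - 7)/32)"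

definition fB :: "nat \<Rightarrow> real" where
  "fB n = real n powr real n * 2 powr ((real n + 1) * real n / 4) / 2 powr (real n * (real n - 1)/2)"

lemma fA_lim: "(fA k \<longlongrightarrow> 0) sequentially"
  unfolding fA_def by real_asymp

lemma fB_lim: "(fB \<longlongrightarrow> 0) sequentially"
  unfolding fB_def by real_asymp

lemma boundA:
  assumes n8: "n \<ge> 8" and m: "m = n div 4"
  shows "fact n * real (n choose m) * real (((m choose 2) + 1) ^ (k * m)) / 2 ^ (m choose 2) \<le> fA k n"
proof -
  define N where "N = real n"
  have Npos: "N > 0" using n8 by (simp add: N_def)
  have m4: "4 * m \<le> n" "n \<le> 4 * m + 3" using m by auto
  have f1: "fact n \<le> N ^ n" using fact_le_power[of n, where 'a=real] by (simp add: N_def)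
  have f2: "real (n choose m) \<le> 2 ^ n"
  proof -
    have "real (n choose m) \<le> real (2 ^ n)" using binomial_le_pow2[of n m] by (rule of_nat_mono)
    then show ?thesis by simp
  qed
  have "m choose 2 \<le> m * m"
  proof -
    have "m choose 2 = m * (m - 1) div 2" by (rule choose_two)
    also have "\<dots> \<le> m * (m - 1)" by (rule div_le_dividend)
    also have "\<dots> \<le> m * m" by (intro mult_le_mono2) simp
    finally show ?thesis .
  qed
  moreover have "(4 * m) * (4 * m) \<le> n * n" using m4 by (intro mult_le_mono) auto
  moreover have "8 * 8 \<le> n * n" using n8 by (intro mult_le_mono) auto
  moreover have "(4 * m) * (4 * m) = 16 * (m * m)" by simp
  ultimately have "(m choose 2) + 1 \<le> n * n" by linarith
  then have "(m choose 2) + 1 \<le> n ^ 2" by (simp add: power2_eq_square)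
  then have "((m choose 2) + 1) ^ (k * m) \<le> (n ^ 2) ^ (k * m)" by (rule power_mono) simp
  also have "\<dots> \<le> (n ^ 2) ^ (k * n)"
  proof (rule power_increasing)
    show "k * m \<le> k * n" using m4 by simp
    show "1 \<le> n ^ 2" using n8 by simp
  qed
  finally have "real (((m choose 2) + 1) ^ (k * m)) \<le> real ((n ^ 2) ^ (k * n))" by (rule of_nat_mono)
  then have f3: "real (((m choose 2) + 1) ^ (k * m)) \<le> (N ^ 2) ^ (k * n)"
    unfolding N_def by simp
  define M where "M = real m"
  have "real n \<le> real (4 * m + 3)" using m4(2) by (rule of_nat_mono)
  then have M1: "M \<ge> (N - 3) / 4" by (simp add: M_def N_def)
  have M2: "M - 1 \<ge> (N - 7) / 4" using M1 by simp
  have N7: "(N - 7) / 4 \<ge> 0" using n8 by (simp add: N_def)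
  have "(N - 3) / 4 * ((N - 7) / 4) \<le> M * (M - 1)"
    using M1 M2 N7 by (intro mult_mono) auto
  then have "(N - 3) * (N - 7) / 32 \<le> real (m choose 2)"
    using choose2_real[of m] by (simp add: M_def)
  then have "2 powr ((N - 3) * (N - 7) / 32) \<le> 2 powr real (m choose 2)"
    by (rule powr_mono) simp
  moreover have "(2::real) powr real (m choose 2) = 2 ^ (m choose 2)" by (rule powr_realpow) simp
  ultimately have f4: "2 powr ((N - 3) * (N - 7) / 32) \<le> 2 ^ (m choose 2)" by simp
  have pos4: "2 powr ((N - 3) * (N - 7) / 32) > 0" by simp
  have "fact n * real (n choose m) * real (((m choose 2) + 1) ^ (k * m)) \<le> N ^ n * 2 ^ n * (N ^ 2) ^ (k * n)"
    using f1 f2 f3 Npos by (intro mult_mono) auto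
  then have "fact n * real (n choose m) * real (((m choose 2) + 1) ^ (k * m)) / 2 ^ (m choose 2)
      \<le> N ^ n * 2 ^ n * (N ^ 2) ^ (k * n) / 2 powr ((N - 3) * (N - 7) / 32)"
    using f4 pos4 Npos by (intro frac_le) auto
  also have "N ^ n * 2 ^ n * (N ^ 2) ^ (k * n) = N powr (N * (1 + 2 * real k)) * 2 powr N"
  proof -
    have "(N ^ 2) ^ (k * n) = N ^ (2 * (k * n))" by (rule power_mult[symmetric])
    then have "N ^ n * (N ^ 2) ^ (k * n) = N ^ (n + 2 * (k * n))" by (simp add: power_add)
    also have "\<dots> = N powr real (n + 2 * (k * n))" by (rule powr_realpow[symmetric]) (rule Npos)
    also have "real (n + 2 * (k * n)) = N * (1 + 2 * real k)" by (simp add: N_def algebra_simps)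
    finally have "N ^ n * (N ^ 2) ^ (k * n) = N powr (N * (1 + 2 * real k))" .
    moreover have "(2::real) ^ n = 2 powr N" by (simp add: N_def powr_realpow)
    ultimately show ?thesis by (simp add: algebra_simps)
  qed
  finally show ?thesis by (simp add: fA_def N_def)
qed

lemma boundB:
  assumes n8: "n \<ge> 8" and m: "m = n div 4"
  shows "fact n * real ((2 ^ n + 1) ^ m) / 2 ^ (n choose 2) \<le> fB n"
proof -
  define N where "N = real n"
  have Npos: "N > 0" using n8 by (simp add: N_def)
  have m4: "4 * m \<le> n" using m by auto
  have f1: "fact n \<le> N ^ n" using fact_le_power[of n, where 'a=real] by (simp add: N_def)
  have "(2 ^ n + 1) ^ m \<le> ((2::nat) ^ (n + 1)) ^ m" by (intro power_mono) auto
  also have "\<dots> = 2 ^ ((n + 1) * m)" by (rule power_mult[symmetric])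
  finally have "real ((2 ^ n + 1) ^ m) \<le> real ((2::nat) ^ ((n + 1) * m))" by (rule of_nat_mono)
  then have "real ((2 ^ n + 1) ^ m) \<le> 2 ^ ((n + 1) * m)" by simp
  also have "(2::real) ^ ((n + 1) * m) = 2 powr real ((n + 1) * m)"
  proof -
    have e: "(2::real) powr real ((n + 1) * m) = 2 ^ ((n + 1) * m)" by (rule powr_realpow) simp
    show ?thesis by (rule e[symmetric])
  qed
  also have "\<dots> \<le> 2 powr ((N + 1) * N / 4)"
  proof (rule powr_mono)
    have "real ((n + 1) * m) * 4 = (N + 1) * real (4 * m)" by (simp add: N_def algebra_simps)
    also have "\<dots> \<le> (N + 1) * N" using m4 by (intro mult_left_mono) (auto simp: N_def)
    finally show "real ((n + 1) * m) \<le> (N + 1) * N / 4" by simp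
  qed simp
  finally have f2: "real ((2 ^ n + 1) ^ m) \<le> 2 powr ((N + 1) * N / 4)" .
  have e: "(2::real) powr real (n choose 2) = 2 ^ (n choose 2)" by (rule powr_realpow) simp
  have f3: "(2::real) ^ (n choose 2) = 2 powr (N * (N - 1) / 2)"
    by (simp only: e[symmetric] choose2_real N_def)
  have "fact n * real ((2 ^ n + 1) ^ m) \<le> N ^ n * 2 powr ((N + 1) * N / 4)"
    using f1 f2 Npos by (intro mult_mono) auto
  then have "fact n * real ((2 ^ n + 1) ^ m) / 2 ^ (n choose 2) \<le> N ^ n * 2 powr ((N + 1) * N / 4) / 2 ^ (n choose 2)"
    by (intro divide_right_mono) auto
  also have "N ^ n = N powr N" using Npos by (simp add: N_def powr_realpow)
  finally show ?thesis using f3 by (simp add: fB_def N_def)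
qed



theorem corollary2:
  fixes k :: nat and Q :: "graph set"
  assumes "Q \<subseteq> {G. is_graph G}"
    and "iso_closed Q"
    and "\<forall>G\<in>Q. treewidth_le G k"
  shows "weakly_distinguishing (P_class Q)"
proof -
  have Qg: "Q \<subseteq> {G. is_graph G}" and Qt: "\<forall>G\<in>Q. treewidth_le G k" using assms by auto
  define r where "r n = real (card (unique_classes (P_class Q) n)) / real (card (iso_classes n))" for n
  have bound: "r n \<le> fA k n + fB n" if n8: "n \<ge> 8" for n
  proof -
    define m where "m = n div 4"
    define u where "u = real (card (unique_classes (P_class Q) n))"
    define c where "c = real (card (iso_classes n))"
    define b where "b = real (card (Bad n m k))"
    define q where "q = real (card (PB n m))"
    define C where "C = n choose 2"
    define Cm where "Cm = m choose 2"
    have u: "u \<le> b + q"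
    proof -
      have "real (card (unique_classes (P_class Q) n)) \<le> real (card (Bad n m k) + card (PB n m))"
        using unique_bound[OF Qg Qt, of n m] by (rule of_nat_mono)
      then show ?thesis by (simp add: u_def b_def q_def)
    qed
    have "real (2 ^ (n choose 2)) \<le> real (fact n * card (iso_classes n))"
      using classes_lower[of n] by (rule of_nat_mono)
    then have cl: "2 ^ C \<le> fact n * c" by (simp add: C_def c_def of_nat_fact)
    have cpos: "c > 0"
    proof -
      have "(0::real) < 2 ^ C" by simp
      also have "\<dots> \<le> fact n * c" by (rule cl)
      finally show ?thesis by (simp add: zero_less_mult_iff)
    qed
    have b0: "b \<ge> 0" "q \<ge> 0" by (simp_all add: b_def q_def)
    have "real (card (Bad n m k)) \<le> real ((n choose m) * ((m choose 2) + 1) ^ (k * m) * 2 ^ ((n choose 2) - (m choose 2)))"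
      using card_Bad[of n m k] by (rule of_nat_mono)
    then have bb: "b \<le> real (n choose m) * real (((m choose 2) + 1) ^ (k * m)) * 2 ^ (C - Cm)"
      by (simp add: b_def C_def Cm_def)
    have "real (card (PB n m)) \<le> real ((2 ^ n + 1) ^ m)" using conjunct2[OF PB_bound] by (rule of_nat_mono)
    then have qq: "q \<le> real ((2 ^ n + 1) ^ m)" by (simp add: q_def)
    have CmC: "Cm \<le> C" unfolding C_def Cm_def m_def by (rule binomial_right_mono) simp
    have p2: "(2::real) ^ (C - Cm) = 2 ^ C / 2 ^ Cm" by (rule power_diff) (simp_all add: CmC)
    have fpos: "(fact n :: real) > 0" by simp
    have "r n = u / c" by (simp add: r_def u_def c_def)
    also have "\<dots> \<le> (b + q) / c" using u cpos by (simp add: divide_right_mono)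
    also have "(b + q) / c = (fact n * (b + q)) / (fact n * c)" using fpos by simp
    also have "\<dots> \<le> (fact n * (b + q)) / 2 ^ C"
      using b0 cl fpos by (intro frac_le) auto
    also have "\<dots> = fact n * b / 2 ^ C + fact n * q / 2 ^ C" by (simp add: algebra_simps add_divide_distrib)
    also have "fact n * b / 2 ^ C \<le> fA k n"
    proof -
      have "fact n * b / 2 ^ C \<le> fact n * (real (n choose m) * real (((m choose 2) + 1) ^ (k * m)) * 2 ^ (C - Cm)) / 2 ^ C"
        using bb fpos by (intro divide_right_mono mult_left_mono) auto
      also have "\<dots> = fact n * real (n choose m) * real (((m choose 2) + 1) ^ (k * m)) / 2 ^ (m choose 2)"
        using p2 unfolding Cm_def by simp
      also have "\<dots> \<le> fA k n" by (rule boundA[OF n8 m_def])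
      finally show ?thesis .
    qed
    also have "fact n * q / 2 ^ C \<le> fB n"
    proof -
      have "fact n * q / 2 ^ C \<le> fact n * real ((2 ^ n + 1) ^ m) / 2 ^ C"
        using qq fpos by (intro divide_right_mono mult_left_mono) auto
      also have "\<dots> \<le> fB n" unfolding C_def by (rule boundB[OF n8 m_def])
      finally show ?thesis .
    qed
    finally show ?thesis by simp
  qed
  have lim: "((\<lambda>n. fA k n + fB n) \<longlongrightarrow> 0) sequentially"
    using tendsto_add[OF fA_lim fB_lim] by simp
  have "(r \<longlongrightarrow> 0) sequentially"
  proof (rule tendsto_sandwich[OF _ _ tendsto_const lim])
    show "\<forall>\<^sub>F n in sequentially. 0 \<le> r n" by (simp add: r_def)
    show "\<forall>\<^sub>F n in sequentially. r n \<le> fA k n + fB n"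
      using bound by (intro eventually_sequentiallyI[of 8]) auto
  qed
  then show ?thesis unfolding weakly_distinguishing_def r_def by simp
qed


end
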